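(* A frame $L$ is subfit if and only if the coframe $(\mathsf{Ex}(L),\sqsubseteq)$ of exact filters is a Boolean algebra.
   Context: A frame is a complete lattice $L$ with $(\bigvee A)\wedge b=\bigvee_{a\in A}(a\wedge b)$. $L$ is subfit if for all $a,b$: whenever ($\forall c$, $a\vee c=1\Rightarrow b\vee c=1$) then $a\le b$. A filter is a nonempty up-closed subset closed under finite meets. A meet $\bigwedge M$ is exact if $(\bigwedge M)\vee b=\bigwedge_{a\in M}(a\vee b)$ for all $b$; $\mathsf{Ex}(L)$ is the set of filters containing every exact meet of their subsets, ordered by reverse inclusion $F\sqsubseteq G$ iff $G\subseteq F$ (it is a coframe in which joins are intersections). *)

theory Defs
  imports Main
begin

definition is_frame :: "'a::complete_lattice itself \<Rightarrow> bool" where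
  "is_frame _ \<longleftrightarrow> (\<forall>(A::'a set) b. inf (Sup A) b = Sup ((\<lambda>a. inf a b) ` A))"

definition subfit :: "'a::complete_lattice itself \<Rightarrow> bool" where
  "subfit _ \<longleftrightarrow> (\<forall>(a::'a) b. (\<forall>c. sup a c = top \<longrightarrow> sup b c = top) \<longrightarrow> a \<le> b)"

definition is_filter :: "'a::complete_lattice set \<Rightarrow> bool" where
  "is_filter F \<longleftrightarrow> F \<noteq> {} \<and> (\<forall>a\<in>F. \<forall>b. a \<le> b \<longrightarrow> b \<in> F) \<and> (\<forall>a\<in>F. \<forall>b\<in>F. inf a b \<in> F)"

definition exact_meet :: "'a::complete_lattice set \<Rightarrow> bool" where
  "exact_meet M \<longleftrightarrow> (\<forall>b. sup (Inf M) b = Inf ((\<lambda>a. sup a b) ` M))"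

definition exact_filters :: "'a::complete_lattice set set" where
  "exact_filters = {F. is_filter F \<and> (\<forall>M. M \<subseteq> F \<and> exact_meet M \<longrightarrow> Inf M \<in> F)}"

definition ex_le :: "'a set \<Rightarrow> 'a set \<Rightarrow> bool" where
  "ex_le F G \<longleftrightarrow> G \<subseteq> F"

definition is_sup_in :: "'b set \<Rightarrow> ('b \<Rightarrow> 'b \<Rightarrow> bool) \<Rightarrow> 'b \<Rightarrow> 'b \<Rightarrow> 'b \<Rightarrow> bool" where
  "is_sup_in S le x y z \<longleftrightarrow> z \<in> S \<and> le x z \<and> le y z \<and> (\<forall>w\<in>S. le x w \<and> le y w \<longrightarrow> le z w)"

definition is_inf_in :: "'b set \<Rightarrow> ('b \<Rightarrow> 'b \<Rightarrow> bool) \<Rightarrow> 'b \<Rightarrow> 'b \<Rightarrow> 'b \<Rightarrow> bool" where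
  "is_inf_in S le x y z \<longleftrightarrow> z \<in> S \<and> le z x \<and> le z y \<and> (\<forall>w\<in>S. le w x \<and> le w y \<longrightarrow> le w z)"

definition boolean_poset :: "'b set \<Rightarrow> ('b \<Rightarrow> 'b \<Rightarrow> bool) \<Rightarrow> bool" where
  "boolean_poset S le \<longleftrightarrow>
     (\<forall>x\<in>S. le x x) \<and>
     (\<forall>x\<in>S. \<forall>y\<in>S. le x y \<and> le y x \<longrightarrow> x = y) \<and>
     (\<forall>x\<in>S. \<forall>y\<in>S. \<forall>z\<in>S. le x y \<and> le y z \<longrightarrow> le x z) \<and>
     (\<exists>b\<in>S. \<forall>x\<in>S. le b x) \<and>
     (\<exists>t\<in>S. \<forall>x\<in>S. le x t) \<and>
     (\<forall>x\<in>S. \<forall>y\<in>S. \<exists>z. is_sup_in S le x y z) \<and>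
     (\<forall>x\<in>S. \<forall>y\<in>S. \<exists>z. is_inf_in S le x y z) \<and>
     (\<forall>x\<in>S. \<forall>y\<in>S. \<forall>z\<in>S. \<forall>yz xyz xy xz r.
        is_sup_in S le y z yz \<and> is_inf_in S le x yz xyz \<and>
        is_inf_in S le x y xy \<and> is_inf_in S le x z xz \<and> is_sup_in S le xy xz r
        \<longrightarrow> xyz = r) \<and>
     (\<forall>x\<in>S. \<exists>y\<in>S. (\<forall>w\<in>S. le w x \<and> le w y \<longrightarrow> (\<forall>v\<in>S. le w v)) \<and>
                     (\<forall>w\<in>S. le x w \<and> le y w \<longrightarrow> (\<forall>v\<in>S. le v w)))"

end

theory Submission
  imports Defs
begin

lemma frame_inf_sup:
  assumes "is_frame TYPE('a::complete_lattice)"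
  shows "inf (sup x y) (z::'a) = sup (inf x z) (inf y z)"
proof -
  have "inf (Sup {x,y}) z = Sup ((\<lambda>a. inf a z) ` {x,y})"
    using assms unfolding is_frame_def by blast
  then show ?thesis by simp
qed

lemma frame_sup_inf:
  assumes "is_frame TYPE('a::complete_lattice)"
  shows "sup (inf x y) (z::'a) = inf (sup x z) (sup y z)"
proof -
  have "inf (sup x z) (sup y z) = sup (inf x (sup y z)) (inf z (sup y z))"
    using frame_inf_sup[OF assms] .
  also have "inf x (sup y z) = sup (inf y x) (inf z x)"
    using frame_inf_sup[OF assms] by (simp add: inf_commute)
  also have "inf z (sup y z) = z" by (simp add: inf_absorb1)
  finally have "inf (sup x z) (sup y z) = sup (sup (inf y x) (inf z x)) z" .
  also have "\<dots> = sup (inf x y) z"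
    by (rule antisym) (auto simp: inf_commute intro: le_supI1 le_supI2)
  finally show ?thesis by simp
qed

definition upset :: "'a::complete_lattice \<Rightarrow> 'a set" where "upset a = {x. a \<le> x}"
definition cl :: "'a::complete_lattice set \<Rightarrow> 'a \<Rightarrow> bool" where
  "cl U y \<longleftrightarrow> Inf {u\<in>U. y \<le> u} \<le> y"
definition gen :: "'a::complete_lattice set \<Rightarrow> 'a set" where
  "gen U = {x. \<forall>y. x \<le> y \<longrightarrow> cl U y}"
definition pc :: "'a::complete_lattice set \<Rightarrow> 'a set" where
  "pc F = {x. \<forall>c\<in>F. sup x c = top}"

lemma cl_Inf: assumes "\<forall>s\<in>S. cl U s" shows "cl U (Inf S)"
  unfolding cl_def
proof (rule Inf_greatest)
  fix s assume s: "s \<in> S"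
  have "Inf {u\<in>U. Inf S \<le> u} \<le> Inf {u\<in>U. s \<le> u}"
    by (rule Inf_superset_mono) (use s Inf_lower order_trans in blast)
  also have "\<dots> \<le> s" using assms s unfolding cl_def by blast
  finally show "Inf {u\<in>U. Inf S \<le> u} \<le> s" .
qed

lemma cl_inf: "cl U a \<Longrightarrow> cl U b \<Longrightarrow> cl U (inf a b)"
  using cl_Inf[of "{a,b}" U] by simp

lemma cl_mono: "U \<subseteq> V \<Longrightarrow> cl U y \<Longrightarrow> cl V y"
proof -
  assume U: "U \<subseteq> V" and c: "cl U y"
  have "Inf {u\<in>V. y \<le> u} \<le> Inf {u\<in>U. y \<le> u}"
    by (rule Inf_superset_mono) (use U in blast)
  then show "cl V y" using c unfolding cl_def by (rule order_trans)
qed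

lemma cl_mem: "y \<in> U \<Longrightarrow> cl U y"
  unfolding cl_def by (simp add: Inf_lower)

lemma ef_top: "F \<in> exact_filters \<Longrightarrow> top \<in> F"
  unfolding exact_filters_def is_filter_def by auto

lemma ef_up: "F \<in> exact_filters \<Longrightarrow> a \<in> F \<Longrightarrow> a \<le> b \<Longrightarrow> b \<in> F"
  unfolding exact_filters_def is_filter_def by auto

lemma ef_inf: "F \<in> exact_filters \<Longrightarrow> a \<in> F \<Longrightarrow> b \<in> F \<Longrightarrow> inf a b \<in> F"
  unfolding exact_filters_def is_filter_def by auto

lemma ef_exact: "F \<in> exact_filters \<Longrightarrow> M \<subseteq> F \<Longrightarrow> exact_meet M \<Longrightarrow> Inf M \<in> F"
  unfolding exact_filters_def by auto

lemma key:
  assumes F: "F \<in> exact_filters" and h: "\<forall>y. x \<le> y \<longrightarrow> cl F y"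
  shows "x \<in> F"
proof -
  define M where "M = {u\<in>F. x \<le> u}"
  have IM: "Inf M = x"
  proof (rule antisym)
    have "cl F x" using h by simp
    then show "Inf M \<le> x" unfolding cl_def M_def .
    show "x \<le> Inf M" unfolding M_def by (auto intro: Inf_greatest)
  qed
  have "exact_meet M" unfolding exact_meet_def
  proof
    fix b
    show "sup (Inf M) b = Inf ((\<lambda>a. sup a b) ` M)"
    proof (rule antisym)
      show "sup (Inf M) b \<le> Inf ((\<lambda>a. sup a b) ` M)"
      proof (rule Inf_greatest)
        fix t assume "t \<in> (\<lambda>a. sup a b) ` M"
        then obtain u where u: "u \<in> M" "t = sup u b" by blast
        then have "x \<le> u" unfolding M_def by simp
        then show "sup (Inf M) b \<le> t" using u IM by (simp add: sup_mono le_supI1)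
      qed
      have "Inf ((\<lambda>a. sup a b) ` M) \<le> Inf {u\<in>F. sup x b \<le> u}"
      proof (rule Inf_greatest)
        fix t assume t: "t \<in> {u\<in>F. sup x b \<le> u}"
        then have "t \<in> M" "sup t b = t" unfolding M_def by (auto simp: sup_absorb1)
        then have "sup t b \<in> (\<lambda>a. sup a b) ` M" by blast
        then have "Inf ((\<lambda>a. sup a b) ` M) \<le> sup t b" by (rule Inf_lower)
        then show "Inf ((\<lambda>a. sup a b) ` M) \<le> t" using \<open>sup t b = t\<close> by simp
      qed
      also have "\<dots> \<le> sup x b" using h[rule_format, of "sup x b"] unfolding cl_def by simp
      finally show "Inf ((\<lambda>a. sup a b) ` M) \<le> sup (Inf M) b" by (simp add: IM)
    qed
  qed
  moreover have "M \<subseteq> F" unfolding M_def by auto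
  ultimately have "Inf M \<in> F" using ef_exact[OF F] by blast
  then show ?thesis using IM by simp
qed

lemma ef_intro:
  assumes "top \<in> F" "\<And>a b. a \<in> F \<Longrightarrow> a \<le> b \<Longrightarrow> b \<in> F"
    "\<And>a b. a \<in> F \<Longrightarrow> b \<in> F \<Longrightarrow> inf a b \<in> F"
    "\<And>M. M \<subseteq> F \<Longrightarrow> exact_meet M \<Longrightarrow> Inf M \<in> F"
  shows "F \<in> exact_filters"
  using assms unfolding exact_filters_def is_filter_def by blast

lemma gen_exact:
  assumes fr: "is_frame TYPE('a::complete_lattice)"
  shows "gen (U::'a set) \<in> exact_filters"
proof (rule ef_intro)
  show "top \<in> gen U" unfolding gen_def cl_def by (auto simp: top_unique)
  show "b \<in> gen U" if "a \<in> gen U" "a \<le> b" for a b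
    using that unfolding gen_def by (auto intro: order_trans)
  show "inf a b \<in> gen U" if a: "a \<in> gen U" and b: "b \<in> gen U" for a b
    unfolding gen_def
  proof (intro CollectI allI impI)
    fix z assume z: "inf a b \<le> z"
    have "z = sup (inf a b) z" using z by (simp add: sup_absorb2)
    also have "\<dots> = inf (sup a z) (sup b z)" by (rule frame_sup_inf[OF fr])
    finally have ze: "z = inf (sup a z) (sup b z)" .
    have "cl U (sup a z)" "cl U (sup b z)" using a b unfolding gen_def by auto
    then show "cl U z" using ze cl_inf by metis
  qed
  show "Inf M \<in> gen U" if M: "M \<subseteq> gen U" and e: "exact_meet M" for M
    unfolding gen_def
  proof (intro CollectI allI impI)
    fix z assume z: "Inf M \<le> z"
    have "z = sup (Inf M) z" using z by (simp add: sup_absorb2)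
    also have "\<dots> = Inf ((\<lambda>a. sup a z) ` M)" using e unfolding exact_meet_def by blast
    finally have ze: "z = Inf ((\<lambda>a. sup a z) ` M)" .
    have "\<forall>s\<in>(\<lambda>a. sup a z) ` M. cl U s" using M unfolding gen_def by auto
    then show "cl U z" using ze cl_Inf by metis
  qed
qed

lemma gen_sub:
  assumes "\<And>u v. u \<in> U \<Longrightarrow> u \<le> v \<Longrightarrow> v \<in> U"
  shows "U \<subseteq> gen U"
  using assms unfolding gen_def by (auto intro: cl_mem)

lemma gen_least:
  assumes "U \<subseteq> F" "F \<in> exact_filters"
  shows "gen U \<subseteq> F"
proof
  fix x assume "x \<in> gen U"
  then have "\<forall>y. x \<le> y \<longrightarrow> cl F y" unfolding gen_def using cl_mono[OF assms(1)] by auto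
  then show "x \<in> F" using key[OF assms(2)] by blast
qed

lemma UNIV_ef: "(UNIV::'a::complete_lattice set) \<in> exact_filters"
  by (rule ef_intro) auto

lemma top_ef: "{top::'a::complete_lattice} \<in> exact_filters"
proof (rule ef_intro)
  show "Inf M \<in> {top}" if "M \<subseteq> {top}" for M :: "'a set"
    using that by (metis Inf_empty Inf_insert inf_top.right_neutral singletonI subset_singletonD)
qed (auto simp: top_unique)

lemma upset_ef: "upset (a::'a::complete_lattice) \<in> exact_filters"
  by (rule ef_intro) (auto simp: upset_def intro: order_trans Inf_greatest)

lemma int_ef: "F \<in> exact_filters \<Longrightarrow> G \<in> exact_filters \<Longrightarrow> F \<inter> G \<in> exact_filters"
  by (rule ef_intro) (auto intro: ef_top ef_up ef_inf ef_exact)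

lemma pc_ef:
  assumes fr: "is_frame TYPE('a::complete_lattice)"
  shows "pc (F::'a set) \<in> exact_filters"
proof (rule ef_intro)
  show "top \<in> pc F" unfolding pc_def by simp
  show "b \<in> pc F" if "a \<in> pc F" "a \<le> b" for a b
    using that unfolding pc_def by (auto simp: top_unique) (metis sup.mono order_refl top_unique)
  show "inf a b \<in> pc F" if "a \<in> pc F" "b \<in> pc F" for a b
    using that unfolding pc_def by (auto simp: frame_sup_inf[OF fr])
  show "Inf M \<in> pc F" if M: "M \<subseteq> pc F" and e: "exact_meet M" for M
    unfolding pc_def
  proof (intro CollectI ballI)
    fix c assume c: "c \<in> F"
    have "sup (Inf M) c = Inf ((\<lambda>a. sup a c) ` M)" using e unfolding exact_meet_def by blast
    also have "\<dots> = top" using M c unfolding pc_def by (auto intro: Inf_top_conv(1)[THEN iffD2])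
    finally show "sup (Inf M) c = top" .
  qed
qed

lemma dist_gen:
  assumes X: "X \<in> exact_filters" and Y: "Y \<in> exact_filters" and Z: "Z \<in> exact_filters"
  shows "gen (X \<union> Y) \<inter> gen (X \<union> Z) \<subseteq> gen (X \<union> (Y \<inter> Z))"
proof
  fix p assume p: "p \<in> gen (X \<union> Y) \<inter> gen (X \<union> Z)"
  let ?T = "X \<union> (Y \<inter> Z)"
  show "p \<in> gen ?T" unfolding gen_def
  proof (intro CollectI allI impI)
    fix q assume pq: "p \<le> q"
    define N where "N = {u\<in>X \<union> Z. q \<le> u}"
    have clq: "Inf N \<le> q" using p pq unfolding gen_def cl_def N_def by auto
    have qN: "q \<le> Inf N" unfolding N_def by (auto intro: Inf_greatest)
    have "\<forall>n\<in>N. cl ?T n"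
    proof
      fix n assume n: "n \<in> N"
      show "cl ?T n"
      proof (cases "n \<in> X")
        case True then show ?thesis by (auto intro: cl_mem)
      next
        case False
        then have nZ: "n \<in> Z" and qn: "q \<le> n" using n unfolding N_def by auto
        have "cl (X \<union> Y) n" using p pq qn unfolding gen_def by (auto intro: order_trans)
        moreover have "{k\<in>X \<union> Y. n \<le> k} \<subseteq> {k\<in>?T. n \<le> k}"
          using nZ ef_up[OF Z] by auto
        ultimately show ?thesis unfolding cl_def
          by (meson Inf_superset_mono order_trans)
      qed
    qed
    then have "cl ?T (Inf N)" by (rule cl_Inf)
    moreover have "Inf N = q" using clq qN by (rule antisym)
    ultimately show "cl ?T q" by simp
  qed
qed

lemma compl_cl:
  assumes sf: "subfit TYPE('a::complete_lattice)" and F: "F \<in> exact_filters"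
  shows "cl (F \<union> pc F) (y::'a)"
proof -
  define d where "d = Inf {u\<in>F \<union> pc F. y \<le> u}"
  have "\<forall>c. sup d c = top \<longrightarrow> sup y c = top"
  proof (intro allI impI)
    fix c assume dc: "sup d c = top"
    let ?u = "sup y c"
    have "?u \<in> pc F" unfolding pc_def
    proof (intro CollectI ballI)
      fix f assume f: "f \<in> F"
      have "sup f y \<in> F" using ef_up[OF F f] by simp
      then have "d \<le> sup f y" unfolding d_def by (auto intro: Inf_lower)
      then have "top \<le> sup (sup f y) c" using dc by (metis sup_mono order_refl)
      then show "sup ?u f = top" by (simp add: top_unique sup_aci)
    qed
    then have "d \<le> ?u" unfolding d_def by (auto intro: Inf_lower)
    then have "top \<le> sup ?u c" using dc by (metis sup_mono order_refl)
    then show "sup y c = top" by (simp add: top_unique sup_aci)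
  qed
  then have "d \<le> y" using sf unfolding subfit_def by blast
  then show ?thesis unfolding cl_def d_def .
qed

lemma sup_is:
  assumes "x \<in> exact_filters" "y \<in> exact_filters" "is_sup_in exact_filters ex_le x y z"
  shows "z = x \<inter> y"
  using assms int_ef[OF assms(1,2)] unfolding is_sup_in_def ex_le_def by blast

lemma inf_is:
  assumes fr: "is_frame TYPE('a::complete_lattice)"
   and "x \<in> exact_filters" "y \<in> exact_filters" "is_inf_in exact_filters ex_le x y (z::'a set)"
  shows "z = gen (x \<union> y)"
proof -
  have G: "gen (x \<union> y) \<in> exact_filters" by (rule gen_exact[OF fr])
  have up: "x \<union> y \<subseteq> gen (x \<union> y)"
    by (rule gen_sub) (use assms(2,3) ef_up in blast)
  have "z \<in> exact_filters" "x \<union> y \<subseteq> z" using assms(4) unfolding is_inf_in_def ex_le_def by auto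
  then have "gen (x \<union> y) \<subseteq> z" by (intro gen_least)
  moreover have "z \<subseteq> gen (x \<union> y)" using assms(4) G up unfolding is_inf_in_def ex_le_def by blast
  ultimately show ?thesis by blast
qed

lemma forward:
  assumes fr: "is_frame TYPE('a::complete_lattice)" and sf: "subfit TYPE('a)"
  shows "boolean_poset (exact_filters :: 'a set set) ex_le"
  unfolding boolean_poset_def
proof (intro conjI)
  let ?S = "exact_filters :: 'a set set"
  show "\<forall>x\<in>?S. ex_le x x" "\<forall>x\<in>?S. \<forall>y\<in>?S. ex_le x y \<and> ex_le y x \<longrightarrow> x = y"
    "\<forall>x\<in>?S. \<forall>y\<in>?S. \<forall>z\<in>?S. ex_le x y \<and> ex_le y z \<longrightarrow> ex_le x z"
    unfolding ex_le_def by auto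
  show "\<exists>b\<in>?S. \<forall>x\<in>?S. ex_le b x" using UNIV_ef unfolding ex_le_def by blast
  show "\<exists>t\<in>?S. \<forall>x\<in>?S. ex_le x t" using top_ef ef_top unfolding ex_le_def by blast
  show "\<forall>x\<in>?S. \<forall>y\<in>?S. \<exists>z. is_sup_in ?S ex_le x y z"
  proof (intro ballI)
    fix x y assume x: "x \<in> ?S" and y: "y \<in> ?S"
    show "\<exists>z. is_sup_in ?S ex_le x y z" unfolding is_sup_in_def ex_le_def
      by (rule exI[of _ "x \<inter> y"]) (use int_ef[OF x y] in blast)
  qed
  show "\<forall>x\<in>?S. \<forall>y\<in>?S. \<exists>z. is_inf_in ?S ex_le x y z"
  proof (intro ballI)
    fix x y assume x: "x \<in> ?S" and y: "y \<in> ?S"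
    have up: "x \<union> y \<subseteq> gen (x \<union> y)"
      by (rule gen_sub) (use x y ef_up in blast)
    show "\<exists>z. is_inf_in ?S ex_le x y z" unfolding is_inf_in_def ex_le_def
    proof (rule exI[of _ "gen (x \<union> y)"], intro conjI ballI impI)
      show "gen (x \<union> y) \<in> ?S" by (rule gen_exact[OF fr])
      show "x \<subseteq> gen (x \<union> y)" "y \<subseteq> gen (x \<union> y)" using up by auto
      fix w assume "w \<in> ?S" "x \<subseteq> w \<and> y \<subseteq> w"
      then show "gen (x \<union> y) \<subseteq> w" by (intro gen_least) auto
    qed
  qed
  show "\<forall>x\<in>?S. \<forall>y\<in>?S. \<forall>z\<in>?S. \<forall>yz xyz xy xz r.
        is_sup_in ?S ex_le y z yz \<and> is_inf_in ?S ex_le x yz xyz \<and>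
        is_inf_in ?S ex_le x y xy \<and> is_inf_in ?S ex_le x z xz \<and> is_sup_in ?S ex_le xy xz r
        \<longrightarrow> xyz = r"
  proof (intro ballI allI impI)
    fix x y z yz xyz xy xz r
    assume x: "x \<in> ?S" and y: "y \<in> ?S" and z: "z \<in> ?S"
    assume h: "is_sup_in ?S ex_le y z yz \<and> is_inf_in ?S ex_le x yz xyz \<and>
        is_inf_in ?S ex_le x y xy \<and> is_inf_in ?S ex_le x z xz \<and> is_sup_in ?S ex_le xy xz r"
    have yz: "yz = y \<inter> z" using sup_is[OF y z] h by blast
    have yzS: "yz \<in> ?S" using yz int_ef[OF y z] by simp
    have xyz: "xyz = gen (x \<union> (y \<inter> z))" using inf_is[OF fr x yzS] h yz by blast
    have xy: "xy = gen (x \<union> y)" using inf_is[OF fr x y] h by blast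
    have xz: "xz = gen (x \<union> z)" using inf_is[OF fr x z] h by blast
    have r: "r = gen (x \<union> y) \<inter> gen (x \<union> z)"
      using sup_is[OF gen_exact[OF fr] gen_exact[OF fr]] h xy xz by blast
    have "gen (x \<union> y) \<inter> gen (x \<union> z) \<subseteq> gen (x \<union> (y \<inter> z))" by (rule dist_gen[OF x y z])
    moreover have "gen (x \<union> (y \<inter> z)) \<subseteq> gen (x \<union> y) \<inter> gen (x \<union> z)"
    proof (rule gen_least)
      have "x \<union> y \<subseteq> gen (x \<union> y)" by (rule gen_sub) (use x y ef_up in blast)
      moreover have "x \<union> z \<subseteq> gen (x \<union> z)" by (rule gen_sub) (use x z ef_up in blast)
      ultimately show "x \<union> (y \<inter> z) \<subseteq> gen (x \<union> y) \<inter> gen (x \<union> z)" by blast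
      show "gen (x \<union> y) \<inter> gen (x \<union> z) \<in> ?S" by (rule int_ef[OF gen_exact[OF fr] gen_exact[OF fr]])
    qed
    ultimately show "xyz = r" using xyz r by blast
  qed
  show "\<forall>x\<in>?S. \<exists>y\<in>?S. (\<forall>w\<in>?S. ex_le w x \<and> ex_le w y \<longrightarrow> (\<forall>v\<in>?S. ex_le w v)) \<and>
                     (\<forall>w\<in>?S. ex_le x w \<and> ex_le y w \<longrightarrow> (\<forall>v\<in>?S. ex_le v w))"
  proof
    fix F assume F: "F \<in> ?S"
    have c1: "\<forall>v\<in>?S. v \<subseteq> w" if w: "w \<in> ?S" "F \<subseteq> w" "pc F \<subseteq> w" for w
    proof -
      have "x \<in> w" for x
      proof (rule key[OF w(1)], intro allI impI)
        fix y show "cl w y" using cl_mono[of "F \<union> pc F" w y] w compl_cl[OF sf F] by blast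
      qed
      then show ?thesis by blast
    qed
    have c2: "\<forall>v\<in>?S. w \<subseteq> v" if w: "w \<in> ?S" "w \<subseteq> F" "w \<subseteq> pc F" for w
    proof -
      have "w \<subseteq> {top}"
      proof
        fix t assume "t \<in> w"
        then have "t \<in> F" "\<forall>c\<in>F. sup t c = top" using w unfolding pc_def by auto
        then show "t \<in> {top}" by auto
      qed
      then show ?thesis using ef_top by blast
    qed
    show "\<exists>y\<in>?S. (\<forall>w\<in>?S. ex_le w F \<and> ex_le w y \<longrightarrow> (\<forall>v\<in>?S. ex_le w v)) \<and>
                     (\<forall>w\<in>?S. ex_le F w \<and> ex_le y w \<longrightarrow> (\<forall>v\<in>?S. ex_le v w))"
    proof (rule bexI[of _ "pc F"], intro conjI ballI impI)
      fix w v assume "w \<in> ?S" "ex_le w F \<and> ex_le w (pc F)" "v \<in> ?S"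
      then show "ex_le w v" using c1 unfolding ex_le_def by blast
    next
      fix w v assume "w \<in> ?S" "ex_le F w \<and> ex_le (pc F) w" "v \<in> ?S"
      then show "ex_le v w" using c2 unfolding ex_le_def by blast
    qed (rule pc_ef[OF fr])
  qed
qed

lemma backward:
  assumes B: "boolean_poset (exact_filters :: 'a::complete_lattice set set) ex_le"
  shows "subfit TYPE('a)"
  unfolding subfit_def
proof (intro allI impI)
  let ?S = "exact_filters :: 'a set set"
  fix a b :: 'a
  assume hyp: "\<forall>c. sup a c = top \<longrightarrow> sup b c = top"
  have A: "upset a \<in> ?S" and Bu: "upset b \<in> ?S" by (rule upset_ef)+
  have Bsup: "\<forall>x\<in>?S. \<forall>y\<in>?S. \<exists>z. is_sup_in ?S ex_le x y z"
    using B unfolding boolean_poset_def by (elim conjE) assumption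
  have Binf: "\<forall>x\<in>?S. \<forall>y\<in>?S. \<exists>z. is_inf_in ?S ex_le x y z"
    using B unfolding boolean_poset_def by (elim conjE) assumption
  have Bc: "\<forall>x\<in>?S. \<exists>y\<in>?S. (\<forall>w\<in>?S. ex_le w x \<and> ex_le w y \<longrightarrow> (\<forall>v\<in>?S. ex_le w v)) \<and>
                     (\<forall>w\<in>?S. ex_le x w \<and> ex_le y w \<longrightarrow> (\<forall>v\<in>?S. ex_le v w))"
    using B unfolding boolean_poset_def by (elim conjE) assumption
  obtain N where N: "N \<in> ?S"
    and C12: "(\<forall>w\<in>?S. ex_le w (upset a) \<and> ex_le w N \<longrightarrow> (\<forall>v\<in>?S. ex_le w v)) \<and>
     (\<forall>w\<in>?S. ex_le (upset a) w \<and> ex_le N w \<longrightarrow> (\<forall>v\<in>?S. ex_le v w))"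
    using Bc[rule_format, OF A] by (elim bexE)
  note C1 = conjunct1[OF C12] and C2 = conjunct2[OF C12]
  have Nt: "sup n a = top" if n: "n \<in> N" for n
  proof -
    have "upset (sup n a) \<subseteq> upset a" "upset (sup n a) \<subseteq> N"
      using ef_up[OF N n] unfolding upset_def by (auto intro: order_trans)
    then have "ex_le {top} (upset (sup n a))"
      by (intro C2[rule_format, OF upset_ef _ top_ef]) (simp add: ex_le_def)
    then have "upset (sup n a) \<subseteq> {top}" unfolding ex_le_def .
    then show ?thesis unfolding upset_def by auto
  qed
  obtain yz where yzh: "is_sup_in ?S ex_le (upset b) N yz" using Bsup Bu N by blast
  then have yzS: "yz \<in> ?S" unfolding is_sup_in_def by blast
  obtain xyz where xyzh: "is_inf_in ?S ex_le (upset a) yz xyz" using Binf A yzS by blast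
  obtain xy where xyh: "is_inf_in ?S ex_le (upset a) (upset b) xy" using Binf A Bu by blast
  obtain xz where xzh: "is_inf_in ?S ex_le (upset a) N xz" using Binf A N by blast
  from xyh xzh have xyS: "xy \<in> ?S" and xzS: "xz \<in> ?S" unfolding is_inf_in_def by auto
  obtain r where rh: "is_sup_in ?S ex_le xy xz r" using Bsup xyS xzS by blast
  have D: "\<forall>x\<in>?S. \<forall>y\<in>?S. \<forall>z\<in>?S. \<forall>yz xyz xy xz r.
        is_sup_in ?S ex_le y z yz \<and> is_inf_in ?S ex_le x yz xyz \<and>
        is_inf_in ?S ex_le x y xy \<and> is_inf_in ?S ex_le x z xz \<and> is_sup_in ?S ex_le xy xz r
        \<longrightarrow> xyz = r" using B unfolding boolean_poset_def by (elim conjE) assumption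
  have eq: "xyz = r"
    by (rule D[rule_format, OF A Bu N, OF conjI[OF yzh conjI[OF xyzh conjI[OF xyh conjI[OF xzh rh]]]]])
  have "yz \<subseteq> {top}"
  proof
    fix t assume t: "t \<in> yz"
    then have tb: "b \<le> t" and tN: "t \<in> N" using yzh unfolding is_sup_in_def ex_le_def upset_def by auto
    have "sup a t = top" using Nt[OF tN] by (simp add: sup_commute)
    then have "sup b t = top" using hyp by blast
    then show "t \<in> {top}" using tb by (simp add: sup_absorb2)
  qed
  then have "yz \<subseteq> upset a" unfolding upset_def by auto
  moreover have I: "\<forall>w\<in>?S. ex_le w (upset a) \<and> ex_le w yz \<longrightarrow> ex_le w xyz"
    using xyzh unfolding is_inf_in_def by (elim conjE)
  ultimately have "ex_le (upset a) xyz" by (intro I[rule_format, OF A]) (simp add: ex_le_def)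
  then have xyza: "xyz \<subseteq> upset a" unfolding ex_le_def .
  have xzl: "ex_le xz (upset a) \<and> ex_le xz N" using xzh unfolding is_inf_in_def by (elim conjE) simp
  have "ex_le xz UNIV" by (rule C1[rule_format, OF xzS xzl UNIV_ef])
  then have xzU: "xz = UNIV" unfolding ex_le_def by blast
  have R: "\<forall>w\<in>?S. ex_le xy w \<and> ex_le xz w \<longrightarrow> ex_le r w"
    using rh unfolding is_sup_in_def by (elim conjE)
  have "ex_le r xy" by (rule R[rule_format, OF xyS]) (simp add: ex_le_def xzU)
  then have "xy \<subseteq> r" unfolding ex_le_def .
  moreover have "ex_le xy (upset b)" using xyh unfolding is_inf_in_def by (elim conjE)
  then have "upset b \<subseteq> xy" unfolding ex_le_def .
  ultimately have "upset b \<subseteq> upset a" using eq xyza by blast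
  then have "b \<in> upset a" unfolding upset_def by auto
  then show "a \<le> b" unfolding upset_def by simp
qed

theorem mainTheorem11:
  assumes "is_frame TYPE('a::complete_lattice)"
  shows "subfit TYPE('a) \<longleftrightarrow> boolean_poset (exact_filters :: 'a set set) ex_le"
  using forward[OF assms] backward by blast

end
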